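(* Let $\langle-,-\rangle$ be a cyclic form on $C$. If $v\notin\mathrm{Span}\{v_1,\dots,v_n,w_1,\dots,w_l\}$, then $$\langle\mu(v_1,\dots,v_n,v),\mu(w_1,\dots,w_l)\rangle=\langle\mu(v_1,\dots,v_n),\mu(v,w_1,\dots,w_l)\rangle.$$
   Context: $k$ is a field of characteristic zero, $V$ a $k$-vector space of dimension $m\ge1$ in degree $0$, $A=\mathrm{Sym}(V)$, and $C=A^{\textup{!`}}$ the exterior coalgebra on $sV$ with elements $\mu(v_1,\dots,v_n)=sv_1\wedge\cdots\wedge sv_n$ (the vectors in each such expression taken linearly independent), counit element $e$, and coproduct $\triangle\mu(v_1,\dots,v_n)=\sum_{p=0}^n\sum_{\sigma\in Sh_{p,n-p}}\mathrm{sgn}(\sigma)\mu(v_{\sigma(1)},\dots,v_{\sigma(p)})\otimes\mu(v_{\sigma(p+1)},\dots,v_{\sigma(n)})$. A symmetric bilinear form of degree $-d$ on $C$ is $\langle-,-\rangle:C\otimes C\to k[d]$ with $\langle a,b\rangle=(-1)^{|a||b|}\langle b,a\rangle$; it is cyclic if $\sum\langle a,b^2\rangle b^1=\sum\langle a^1,b\rangle a^2$ for all $a,b$, where $\triangle(a)=\sum a^1\otimes a^2$, $\triangle(b)=\sum b^1\otimes b^2$. *)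

theory Defs
  imports "HOL-Analysis.Analysis"
begin

text \<open>
Model: V = k^m, vectors are functions nat => k supported in {..<m} (coordinates
w.r.t. a basis e_0,...,e_{m-1}).  C = Lambda(sV) has the basis
e_S = s e_{s_1} wedge ... wedge s e_{s_r}  for S = {s_1 < ... < s_r} subset {..<m};
an element of C is its coefficient function  nat set => k, supported on Pow {..<m}.
The degree of e_S is card S.
\<close>

definition vecV :: "nat \<Rightarrow> (nat \<Rightarrow> 'k::field) set" where
  "vecV m = {v. \<forall>i. m \<le> i \<longrightarrow> v i = 0}"

definition carrierC :: "nat \<Rightarrow> (nat set \<Rightarrow> 'k::field) set" where
  "carrierC m = {a. \<forall>S. \<not> S \<subseteq> {..<m} \<longrightarrow> a S = 0}"

definition basisC :: "nat set \<Rightarrow> nat set \<Rightarrow> 'k::field" where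
  "basisC S = (\<lambda>T. if T = S then 1 else 0)"

definition lincomb :: "(nat \<Rightarrow> 'k::field) \<Rightarrow> (nat \<Rightarrow> 'k) list \<Rightarrow> nat \<Rightarrow> 'k" where
  "lincomb c vs = (\<lambda>x. \<Sum>i<length vs. c i * (vs ! i) x)"

definition in_span :: "(nat \<Rightarrow> 'k::field) \<Rightarrow> (nat \<Rightarrow> 'k) list \<Rightarrow> bool" where
  "in_span v vs \<longleftrightarrow> (\<exists>c. v = lincomb c vs)"

definition lin_indep :: "(nat \<Rightarrow> 'k::field) list \<Rightarrow> bool" where
  "lin_indep vs \<longleftrightarrow> (\<forall>c. lincomb c vs = (\<lambda>x. 0) \<longrightarrow> (\<forall>i<length vs. c i = 0))"

text \<open>mu(v_1,...,v_n) = s v_1 wedge ... wedge s v_n : coefficient at e_S is the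
minor det[ v_i(s_j) ] (Leibniz formula).\<close>

definition mu :: "nat \<Rightarrow> (nat \<Rightarrow> 'k::field) list \<Rightarrow> nat set \<Rightarrow> 'k" where
  "mu m vs = (\<lambda>S. if S \<subseteq> {..<m} \<and> card S = length vs then
      (\<Sum>p | p permutes {..<length vs}.
          of_int (sign p) * (\<Prod>i<length vs. (vs ! i) (sorted_list_of_set S ! p i)))
    else 0)"

text \<open>Coproduct: Delta(e_{P \<union> Q}) contains e_P \<otimes> e_Q with the sign of the
(p,q)-shuffle, i.e. (-1)^(number of pairs p in P, q in Q with q < p).
An element of C \<otimes> C is a coefficient function on pairs of basis elements.\<close>

definition shuffle_sign :: "nat set \<Rightarrow> nat set \<Rightarrow> 'k::field" where
  "shuffle_sign P Q = (-1) ^ card {(p, q). p \<in> P \<and> q \<in> Q \<and> q < p}"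

definition coprod :: "(nat set \<Rightarrow> 'k::field) \<Rightarrow> nat set \<Rightarrow> nat set \<Rightarrow> 'k" where
  "coprod a P Q = (if P \<inter> Q = {} then shuffle_sign P Q * a (P \<union> Q) else 0)"

definition form :: "nat \<Rightarrow> (nat set \<Rightarrow> nat set \<Rightarrow> 'k::field) \<Rightarrow>
    (nat set \<Rightarrow> 'k) \<Rightarrow> (nat set \<Rightarrow> 'k) \<Rightarrow> 'k" where
  "form m g a b = (\<Sum>S\<in>Pow {..<m}. \<Sum>T\<in>Pow {..<m}. a S * b T * g S T)"

text \<open>Degree -d: <e_S, e_T> can only be nonzero if |e_S| + |e_T| = d.\<close>

definition of_degree :: "nat \<Rightarrow> int \<Rightarrow> (nat set \<Rightarrow> nat set \<Rightarrow> 'k::field) \<Rightarrow> bool" where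
  "of_degree m d g \<longleftrightarrow> (\<forall>S T. S \<subseteq> {..<m} \<and> T \<subseteq> {..<m} \<and> g S T \<noteq> 0
      \<longrightarrow> int (card S) + int (card T) = d)"

definition symmetric_form :: "nat \<Rightarrow> (nat set \<Rightarrow> nat set \<Rightarrow> 'k::field) \<Rightarrow> bool" where
  "symmetric_form m g \<longleftrightarrow> (\<forall>S T. S \<subseteq> {..<m} \<and> T \<subseteq> {..<m}
      \<longrightarrow> g S T = (-1) ^ (card S * card T) * g T S)"

text \<open>Cyclicity: sum <a,b^2> b^1 = sum <a^1,b> a^2 for all a, b in C.\<close>

definition cyclic_form :: "nat \<Rightarrow> (nat set \<Rightarrow> nat set \<Rightarrow> 'k::field) \<Rightarrow> bool" where
  "cyclic_form m g \<longleftrightarrow> (\<forall>a\<in>carrierC m. \<forall>b\<in>carrierC m.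
      (\<lambda>P. \<Sum>Q\<in>Pow {..<m}. coprod b P Q * form m g a (basisC Q))
    = (\<lambda>Q. \<Sum>P\<in>Pow {..<m}. coprod a P Q * form m g (basisC P) b))"

end

theory Submission imports Defs "Jordan_Normal_Form.Determinant" "HOL-Library.Function_Algebras" begin



lemma sum_fun_apply: "(sum f A :: nat \<Rightarrow> 'k::comm_monoid_add) j = (\<Sum>i\<in>A. f i j)"
  by (induction A rule: infinite_finite_induct) auto

lemma sep_functional:
  fixes L :: "(nat \<Rightarrow> 'k::field) list"
  assumes L: "set L \<subseteq> vecV m" and v: "v \<in> vecV m" and ns: "\<not> in_span v L"
  shows "\<exists>h. (\<Sum>i<m. h i * v i) = 1 \<and> (\<forall>w\<in>set L. (\<Sum>i<m. h i * w i) = 0)"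
proof -
  define sc where "sc = (\<lambda>(c::'k) (x::nat\<Rightarrow>'k). (\<lambda>j. c * x j))"
  have VS: "vector_space sc"
    by unfold_locales (auto simp: sc_def algebra_simps fun_eq_iff)
  interpret V: vector_space sc by (rule VS)
  have VP: "vector_space_pair sc ((*)::'k\<Rightarrow>'k\<Rightarrow>'k)"
    by unfold_locales (auto simp: sc_def algebra_simps fun_eq_iff)
  interpret P: vector_space_pair sc "(*)::'k\<Rightarrow>'k\<Rightarrow>'k" by (rule VP)
  have sub: "V.subspace {x. in_span x L}"
    unfolding V.subspace_def
  proof (intro conjI allI ballI impI)
    show "0 \<in> {x. in_span x L}"
      by (auto simp: in_span_def lincomb_def fun_eq_iff intro!: exI[of _ "\<lambda>_. 0"])
  next
    fix x y assume "x \<in> {x. in_span x L}" "y \<in> {x. in_span x L}"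
    then obtain c d where "x = lincomb c L" "y = lincomb d L" by (auto simp: in_span_def)
    then show "x + y \<in> {x. in_span x L}"
      by (auto simp: in_span_def lincomb_def fun_eq_iff algebra_simps sum.distrib
          intro!: exI[of _ "\<lambda>i. c i + d i"])
  next
    fix a x assume "x \<in> {x. in_span x L}"
    then obtain c where "x = lincomb c L" by (auto simp: in_span_def)
    then show "sc a x \<in> {x. in_span x L}"
      by (auto simp: sc_def in_span_def lincomb_def fun_eq_iff algebra_simps sum_distrib_left
          intro!: exI[of _ "\<lambda>i. a * c i"])
  qed
  have inL: "in_span w L" if wL: "w \<in> set L" for w
  proof -
    obtain j where j: "j < length L" "L ! j = w" using in_set_conv_nth[THEN iffD1, OF wL] by blast
    have "lincomb (\<lambda>i. if i = j then 1 else 0) L = w"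
    proof -
      have e: "\<And>i a. (if i = j then 1 else 0) * a = (if i = j then a else (0::'k))" by simp
      show ?thesis using j by (simp add: lincomb_def fun_eq_iff e)
    qed
    then show ?thesis unfolding in_span_def by metis
  qed
  have spanL: "in_span x L" if "x \<in> V.span (set L)" for x
    using V.span_induct[OF that, of "\<lambda>x. in_span x L"] sub inL by auto
  obtain B where B: "B \<subseteq> set L" "V.independent B" "set L \<subseteq> V.span B"
    using V.maximal_independent_subset by blast
  have vB: "v \<notin> V.span B"
  proof
    assume "v \<in> V.span B"
    then have "v \<in> V.span (set L)" using V.span_mono[OF B(1)] by auto
    then show False using spanL ns by blast
  qed
  then have vB': "v \<notin> B" using V.span_base by blast
  have ind: "V.independent (insert v B)" using V.independent_insertI[OF vB B(2)] .
  obtain h0 where lin: "Vector_Spaces.linear sc (*) h0"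
    and h0: "\<forall>x\<in>insert v B. h0 x = (if x = v then 1 else 0)"
    using P.linear_independent_extend[OF ind, of "\<lambda>x. if x = v then 1 else 0"] by blast
  have h0L: "h0 w = 0" if "w \<in> set L" for w
  proof -
    have z: "\<And>x. x \<in> B \<Longrightarrow> h0 x = 0" using h0 vB' by auto
    show ?thesis using P.linear_eq_0_on_span[OF lin z] B(3) that by auto
  qed
  define h where "h i = h0 (\<lambda>j. if j = i then 1 else 0)" for i
  have rep: "h0 x = (\<Sum>i<m. h i * x i)" if "x \<in> vecV m" for x
  proof -
    have "x = (\<Sum>i<m. sc (x i) (\<lambda>j. if j = i then 1 else 0))"
    proof (rule ext)
      fix j :: nat
      have e: "\<And>i a. a * (if j = i then 1 else 0) = (if j = i then a else (0::'k))" by simp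
      show "x j = (\<Sum>i<m. sc (x i) (\<lambda>j. if j = i then 1 else 0)) j"
        using that by (cases "j < m") (auto simp: sc_def sum_fun_apply e vecV_def)
    qed
    then have "h0 x = h0 (\<Sum>i<m. sc (x i) (\<lambda>j. if j = i then 1 else 0))" by simp
    also have "\<dots> = (\<Sum>i<m. x i * h i)"
      by (simp add: P.linear_sum[OF lin] P.linear_scale[OF lin] h_def)
    finally show ?thesis by (simp add: mult.commute)
  qed
  show ?thesis
  proof (intro exI[of _ h] conjI ballI)
    show "(\<Sum>i<m. h i * v i) = 1" using rep[OF v] h0 by auto
  next
    fix w assume w: "w \<in> set L"
    then have "w \<in> vecV m" using L by auto
    then show "(\<Sum>i<m. h i * w i) = 0" using rep h0L[OF w] by metis
  qed
qed




definition Mt :: "(nat \<Rightarrow> 'k::comm_ring_1) list \<Rightarrow> nat list \<Rightarrow> 'k mat" where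
  "Mt us cs = mat (length us) (length cs) (\<lambda>(r,j). (us!r) (cs!j))"
definition Dt :: "(nat \<Rightarrow> 'k::comm_ring_1) list \<Rightarrow> nat list \<Rightarrow> 'k" where
  "Dt us cs = det (Mt us cs)"
definition del :: "nat \<Rightarrow> 'a list \<Rightarrow> 'a list" where
  "del r xs = take r xs @ drop (Suc r) xs"

lemma length_del[simp]: "r < length xs \<Longrightarrow> length (del r xs) = length xs - 1"
  by (simp add: del_def)

lemma nth_del: "r < length xs \<Longrightarrow> i < length xs - 1 \<Longrightarrow>
   del r xs ! i = xs ! (if i < r then i else Suc i)"
  by (auto simp: del_def nth_append min_def)

lemma mu_Dt: "mu m us S = (if S \<subseteq> {..<m} \<and> card S = length us
     then Dt us (sorted_list_of_set S) else 0)"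
proof (cases "S \<subseteq> {..<m} \<and> card S = length us")
  case True
  then have fin: "finite S" using finite_subset by blast
  let ?L = "sorted_list_of_set S"
  let ?n = "length us"
  have len: "length ?L = ?n" using True fin by simp
  have "Dt us ?L = (\<Sum>p\<in>{p. p permutes {0..<?n}}. of_int (sign p) *
          (\<Prod>i = 0..<?n. Mt us ?L $$ (i, p i)))"
    unfolding Dt_def det_def using True by (simp add: Mt_def len)
  also have "\<dots> = (\<Sum>p | p permutes {..<?n}. of_int (sign p) *
          (\<Prod>i<?n. (us ! i) (?L ! p i)))"
  proof (rule sum.cong)
    show "{p. p permutes {0..<?n}} = {p. p permutes {..<?n}}" by (simp add: atLeast0LessThan)
  next
    fix p assume "p \<in> {p. p permutes {..<?n}}"
    then have p: "p permutes {..<?n}" by simp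
    have "(\<Prod>i = 0..<?n. Mt us ?L $$ (i, p i)) = (\<Prod>i<?n. (us ! i) (?L ! p i))"
    proof (rule prod.cong)
      fix x assume "x \<in> {..<?n}"
      then have x: "x < ?n" by simp
      then have px: "p x < ?n" using permutes_in_image[OF p] by simp
      show "Mt us ?L $$ (x, p x) = (us ! x) (?L ! p x)"
        using x px len by (simp add: Mt_def)
    qed (simp add: atLeast0LessThan)
    then show "of_int (sign p) * (\<Prod>i = 0..<?n. Mt us ?L $$ (i, p i)) =
      of_int (sign p) * (\<Prod>i<?n. (us ! i) (?L ! p i))" by simp
  qed
  finally show ?thesis using True by (simp add: mu_def)
next
  case False
  show ?thesis unfolding mu_def by (simp only: False if_False)
qed

lemma mat_delete_Mt:
  assumes r: "r < length us" and len: "length us = Suc (length L1 + length L2)"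
  shows "mat_delete (Mt us (L1 @ c # L2)) r (length L1) = Mt (del r us) (L1 @ L2)"
proof (rule eq_matI)
  show "dim_row (mat_delete (Mt us (L1 @ c # L2)) r (length L1)) = dim_row (Mt (del r us) (L1 @ L2))"
    using r by (simp add: Mt_def)
  show "dim_col (mat_delete (Mt us (L1 @ c # L2)) r (length L1)) = dim_col (Mt (del r us) (L1 @ L2))"
    by (simp add: Mt_def)
  fix i j assume i: "i < dim_row (Mt (del r us) (L1 @ L2))" and j: "j < dim_col (Mt (del r us) (L1 @ L2))"
  have i': "i < length us - 1" using i r by (simp add: Mt_def)
  have j': "j < length L1 + length L2" using j by (simp add: Mt_def)
  have c: "(L1 @ c # L2) ! (if j < length L1 then j else Suc j) = (L1 @ L2) ! j"
    using j' by (auto simp: nth_append)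
  show "mat_delete (Mt us (L1 @ c # L2)) r (length L1) $$ (i, j) = Mt (del r us) (L1 @ L2) $$ (i, j)"
    using i' j' r len c by (auto simp: mat_delete_def Mt_def nth_del)
qed

lemma Dt_laplace:
  assumes len: "length us = Suc (length L1 + length L2)"
  shows "Dt us (L1 @ c # L2) = (\<Sum>r<length us. (-1)^(r + length L1) * (us!r) c * Dt (del r us) (L1 @ L2))"
proof -
  have A: "Mt us (L1 @ c # L2) \<in> carrier_mat (length us) (length us)"
    using len by (simp add: Mt_def)
  have "Dt us (L1 @ c # L2) = (\<Sum>r<length us. Mt us (L1 @ c # L2) $$ (r, length L1) *
           cofactor (Mt us (L1 @ c # L2)) r (length L1))"
    unfolding Dt_def by (rule laplace_expansion_column[OF A]) (simp add: len)
  also have "\<dots> = (\<Sum>r<length us. (-1)^(r + length L1) * (us!r) c * Dt (del r us) (L1 @ L2))"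
  proof (rule sum.cong)
    fix r assume "r \<in> {..<length us}"
    then have r: "r < length us" by simp
    have 1: "mat_delete (Mt us (L1 @ c # L2)) r (length L1) = Mt (del r us) (L1 @ L2)"
      by (rule mat_delete_Mt[OF r len])
    have 2: "Mt us (L1 @ c # L2) $$ (r, length L1) = (us!r) c"
      using r len by (simp add: Mt_def nth_append)
    show "Mt us (L1 @ c # L2) $$ (r, length L1) * cofactor (Mt us (L1 @ c # L2)) r (length L1) =
      (-1)^(r + length L1) * (us!r) c * Dt (del r us) (L1 @ L2)"
      unfolding cofactor_def 1 2 Dt_def by simp
  qed simp
  finally show ?thesis .
qed

lemma Dt_rep0:
  assumes len: "length us = Suc (length L)" and i: "i \<in> set L"
  shows "Dt us (i # L) = 0"
proof -
  obtain k where k: "k < length L" "L ! k = i" using in_set_conv_nth[THEN iffD1, OF i] by blast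
  have A: "Mt us (i # L) \<in> carrier_mat (length us) (length us)"
    using len by (simp add: Mt_def)
  show ?thesis unfolding Dt_def
    by (rule det_identical_columns[OF A, of 0 "Suc k"]) 
       (use k len in \<open>auto simp: Mt_def intro!: eq_vecI\<close>)
qed




lemma sorted_insert_split:
  assumes fin: "finite Q" and iQ: "i \<notin> Q"
  defines "L \<equiv> sorted_list_of_set Q"
  shows "sorted_list_of_set (insert i Q) = filter (\<lambda>q. q < i) L @ i # filter (\<lambda>q. i < q) L"
    and "filter (\<lambda>q. q < i) L @ filter (\<lambda>q. i < q) L = L"
proof -
  have sL: "sorted_wrt (<) L" "distinct L" "set L = Q" using fin by (auto simp: L_def)
  let ?L1 = "filter (\<lambda>q. q < i) L" and ?L2 = "filter (\<lambda>q. i < q) L"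
  have s1: "sorted_wrt (<) (?L1 @ i # ?L2)"
    using sL(1) by (auto simp: sorted_wrt_append sorted_wrt_filter)
  have d1: "distinct (?L1 @ i # ?L2)" using sL iQ by auto
  have st1: "set (?L1 @ i # ?L2) = insert i Q" using sL iQ by auto
  show "sorted_list_of_set (insert i Q) = ?L1 @ i # ?L2"
    using sorted_list_of_set_unique[of "insert i Q" "?L1 @ i # ?L2"] fin s1 st1
      distinct_card[OF d1] by simp
  have s2: "sorted_wrt (<) (?L1 @ ?L2)"
    using sL(1) by (auto simp: sorted_wrt_append sorted_wrt_filter)
  have d2: "distinct (?L1 @ ?L2)" using sL iQ by auto
  have st2: "set (?L1 @ ?L2) = Q" 
  proof
    show "set (?L1 @ ?L2) \<subseteq> Q" using sL by auto
    show "Q \<subseteq> set (?L1 @ ?L2)"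
    proof
      fix x assume x: "x \<in> Q"
      then have "x \<noteq> i" using iQ by auto
      then have "x < i \<or> i < x" using linorder_neq_iff by blast
      then show "x \<in> set (?L1 @ ?L2)" using x sL by auto
    qed
  qed
  show "?L1 @ ?L2 = L"
    using sorted_list_of_set_unique[of Q "?L1 @ ?L2"] fin s2 st2
      distinct_card[OF d2] by (simp add: L_def)
qed

lemma shuffle_sign_single:
  assumes fin: "finite Q"
  shows "shuffle_sign {i} Q = (-1) ^ length (filter (\<lambda>q. q < i) (sorted_list_of_set Q))"
proof -
  have "{(p, q). p \<in> {i} \<and> q \<in> Q \<and> q < p} = (\<lambda>q. (i, q)) ` {q \<in> Q. q < i}" by auto
  then have "card {(p, q). p \<in> {i} \<and> q \<in> Q \<and> q < p} = card {q \<in> Q. q < i}"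
    by (simp add: card_image inj_on_def)
  also have "\<dots> = length (filter (\<lambda>q. q < i) (sorted_list_of_set Q))"
  proof -
    have "set (filter (\<lambda>q. q < i) (sorted_list_of_set Q)) = {q \<in> Q. q < i}" using fin by auto
    moreover have "distinct (filter (\<lambda>q. q < i) (sorted_list_of_set Q))" by simp
    ultimately show ?thesis using distinct_card by metis
  qed
  finally show ?thesis by (simp add: shuffle_sign_def)
qed

lemma coprod_mu:
  assumes len: "length us = Suc n" and Q: "Q \<subseteq> {..<m}" and cQ: "card Q = n" and i: "i < m"
  shows "coprod (mu m us) {i} Q =
     (\<Sum>r<Suc n. (-1)^r * (us!r) i * Dt (del r us) (sorted_list_of_set Q))"
proof -
  have fin: "finite Q" using Q finite_subset by blast
  let ?L = "sorted_list_of_set Q"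
  have lenL: "length ?L = n" using fin cQ by simp
  show ?thesis
  proof (cases "i \<in> Q")
    case True
    have "(\<Sum>r<Suc n. (-1)^r * (us!r) i * Dt (del r us) ?L) = Dt us ([] @ i # ?L)"
      using Dt_laplace[of us "[]" ?L i] len lenL by simp
    also have "\<dots> = 0" using Dt_rep0[of us ?L i] len lenL True fin by simp
    finally show ?thesis using True by (simp add: coprod_def)
  next
    case False
    let ?L1 = "filter (\<lambda>q. q < i) ?L" and ?L2 = "filter (\<lambda>q. i < q) ?L"
    have spl: "sorted_list_of_set (insert i Q) = ?L1 @ i # ?L2" "?L1 @ ?L2 = ?L"
      using sorted_insert_split[OF fin False] by auto
    have l12: "length ?L1 + length ?L2 = n" using spl(2) lenL
      by (metis length_append)
    have cI: "card (insert i Q) = Suc n" using fin False cQ by simp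
    have sub: "insert i Q \<subseteq> {..<m}" using Q i by auto
    have "coprod (mu m us) {i} Q = (-1) ^ length ?L1 * mu m us (insert i Q)"
      using False by (simp add: coprod_def shuffle_sign_single[OF fin])
    also have "mu m us (insert i Q) = Dt us (?L1 @ i # ?L2)"
      using sub cI len spl(1) by (simp add: mu_Dt)
    also have "\<dots> = (\<Sum>r<length us. (-1)^(r + length ?L1) * (us!r) i * Dt (del r us) (?L1 @ ?L2))"
      using Dt_laplace[of us ?L1 ?L2 i] len l12 by simp
    also have "(-1) ^ length ?L1 * \<dots> = (\<Sum>r<Suc n. (-1)^r * (us!r) i * Dt (del r us) ?L)"
      unfolding spl(2) len sum_distrib_left
    proof (rule sum.cong)
      fix r
      have "(-1::'a) ^ length ?L1 * (-1) ^ (r + length ?L1) = (-1)^r"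
        by (simp add: power_add mult.commute)
      then show "(-1) ^ length ?L1 * ((-1) ^ (r + length ?L1) * (us ! r) i * Dt (del r us) ?L) =
          (-1)^r * (us!r) i * Dt (del r us) ?L"
        by (metis mult.assoc)
    qed simp
    finally show ?thesis .
  qed
qed




lemma contract:
  assumes len: "length us = Suc n" and Q: "Q \<subseteq> {..<m}" and cQ: "card Q = n"
  shows "(\<Sum>i<m. h i * coprod (mu m us) {i} Q) =
    (\<Sum>r<Suc n. (-1)^r * (\<Sum>i<m. h i * (us!r) i) * Dt (del r us) (sorted_list_of_set Q))"
proof -
  let ?D = "\<lambda>r. Dt (del r us) (sorted_list_of_set Q)"
  have "(\<Sum>i<m. h i * coprod (mu m us) {i} Q) =
      (\<Sum>i<m. h i * (\<Sum>r<Suc n. (-1)^r * (us!r) i * ?D r))"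
    using coprod_mu[OF len Q cQ] by (intro sum.cong) auto
  also have "\<dots> = (\<Sum>i<m. \<Sum>r<Suc n. h i * ((-1)^r * (us!r) i * ?D r))"
    by (simp only: sum_distrib_left)
  also have "\<dots> = (\<Sum>r<Suc n. \<Sum>i<m. h i * ((-1)^r * (us!r) i * ?D r))"
    by (rule sum.swap)
  also have "\<dots> = (\<Sum>r<Suc n. (-1)^r * (\<Sum>i<m. h i * (us!r) i) * ?D r)"
    by (intro sum.cong refl) (simp add: sum_distrib_left sum_distrib_right mult_ac)
  finally show ?thesis .
qed

lemma coprod_mu_zero:
  assumes Q: "Q \<subseteq> {..<m}" and cQ: "card Q \<noteq> n" and len: "length us = Suc n"
  shows "coprod (mu m us) {i} Q = 0"
proof -
  have fin: "finite Q" using Q finite_subset by blast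
  show ?thesis
  proof (cases "i \<in> Q")
    case False
    then have "card ({i} \<union> Q) = Suc (card Q)" using fin by simp
    then show ?thesis using cQ len by (simp add: coprod_def mu_def)
  qed (simp add: coprod_def)
qed

lemma contract_first:
  assumes F1: "(\<Sum>i<m. h i * v i) = 1" and F0: "\<forall>w\<in>set ws. (\<Sum>i<m. h i * w i) = 0"
    and Q: "Q \<subseteq> {..<m}"
  shows "(\<Sum>i<m. h i * coprod (mu m (v # ws)) {i} Q) = mu m ws Q"
proof (cases "card Q = length ws")
  case True
  have "(\<Sum>i<m. h i * coprod (mu m (v # ws)) {i} Q) =
    (\<Sum>r<Suc (length ws). (-1)^r * (\<Sum>i<m. h i * ((v#ws)!r) i) * Dt (del r (v#ws)) (sorted_list_of_set Q))"
    by (rule contract) (use Q True in auto)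
  also have "\<dots> = Dt ws (sorted_list_of_set Q)"
    unfolding sum.lessThan_Suc_shift using F1 F0 by (simp add: del_def)
  also have "\<dots> = mu m ws Q" using Q True by (simp add: mu_Dt)
  finally show ?thesis .
next
  case False
  then show ?thesis using coprod_mu_zero[OF Q False, of "v # ws"] Q by (simp add: mu_def)
qed

lemma pairset_A: "{(p, q). p \<in> (P::nat set) \<and> q \<in> {i} \<and> q < p} = (\<lambda>p. (p, i)) ` {p \<in> P. i < p}"
  by force

lemma coprod_swap1:
  assumes fin: "finite P"
  shows "coprod a P {i} = (-1)^(card P) * coprod a {i} P"
proof (cases "i \<in> P")
  case False
  have A: "{(p, q). p \<in> P \<and> q \<in> {i} \<and> q < p} = (\<lambda>p. (p, i)) ` {p \<in> P. i < p}"
    by (rule pairset_A)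
  have B: "{(p, q). p \<in> {i} \<and> q \<in> P \<and> q < p} = (\<lambda>q. (i, q)) ` {q \<in> P. q < i}" by auto
  have cA: "card {(p, q). p \<in> P \<and> q \<in> {i} \<and> q < p} = card {p \<in> P. i < p}"
    unfolding A by (simp add: card_image inj_on_def)
  have cB: "card {(p, q). p \<in> {i} \<and> q \<in> P \<and> q < p} = card {q \<in> P. q < i}"
    unfolding B by (simp add: card_image inj_on_def)
  have un: "{p \<in> P. i < p} \<union> {q \<in> P. q < i} = P" 
  proof
    show "{p \<in> P. i < p} \<union> {q \<in> P. q < i} \<subseteq> P" by auto
    show "P \<subseteq> {p \<in> P. i < p} \<union> {q \<in> P. q < i}"
    proof
      fix x assume x: "x \<in> P"
      then have "x \<noteq> i" using False by auto
      then have "x < i \<or> i < x" using linorder_neq_iff by blast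
      then show "x \<in> {p \<in> P. i < p} \<union> {q \<in> P. q < i}" using x by auto
    qed
  qed
  have cP: "card {p \<in> P. i < p} + card {q \<in> P. q < i} = card P"
  proof -
    have h: "card ({p \<in> P. i < p} \<union> {q \<in> P. q < i}) = card {p \<in> P. i < p} + card {q \<in> P. q < i}"
      by (rule card_Un_disjoint) (use fin in auto)
    show ?thesis using h unfolding un by (rule sym)
  qed
  have sg: "(-1::'a) ^ card {p \<in> P. i < p} = (-1)^(card P) * (-1) ^ card {q \<in> P. q < i}"
  proof -
    let ?a = "card {p \<in> P. i < p}" and ?b = "card {q \<in> P. q < i}"
    have "(-1::'a)^(?a + ?b) * (-1)^?b = (-1)^?a * ((-1)^?b * (-1)^?b)"
      by (simp only: power_add mult.assoc)
    also have "(-1::'a)^?b * (-1)^?b = 1" by (rule minus_one_mult_self)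
    finally show ?thesis unfolding cP by simp
  qed
  have s1: "(shuffle_sign P {i} :: 'a) = (-1)^card P * shuffle_sign {i} P"
    unfolding shuffle_sign_def cA cB by (rule sg)
  have un2: "P \<union> {i} = {i} \<union> P" by auto
  have d1: "P \<inter> {i} = {}" "{i} \<inter> P = {}" using False by auto
  show ?thesis unfolding coprod_def d1 un2 s1 by (simp add: mult.assoc)
qed (simp add: coprod_def)

lemma contract_last:
  assumes F1: "(\<Sum>i<m. h i * v i) = 1" and F0: "\<forall>w\<in>set vs. (\<Sum>i<m. h i * w i) = 0"
    and P: "P \<subseteq> {..<m}"
  shows "(\<Sum>i<m. h i * coprod (mu m (vs @ [v])) P {i}) = mu m vs P"
proof -
  have fin: "finite P" using P finite_subset by blast
  have "(\<Sum>i<m. h i * coprod (mu m (vs @ [v])) P {i}) =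
      (-1)^(card P) * (\<Sum>i<m. h i * coprod (mu m (vs @ [v])) {i} P)"
    by (simp add: coprod_swap1[OF fin] sum_distrib_left mult_ac)
  also have "\<dots> = mu m vs P"
  proof (cases "card P = length vs")
    case True
    let ?n = "length vs"
    have "(\<Sum>i<m. h i * coprod (mu m (vs @ [v])) {i} P) =
      (\<Sum>r<Suc ?n. (-1)^r * (\<Sum>i<m. h i * ((vs @ [v])!r) i) * Dt (del r (vs @ [v])) (sorted_list_of_set P))"
      by (rule contract) (use P True in auto)
    also have "\<dots> = (-1)^?n * Dt vs (sorted_list_of_set P)"
    proof -
      have z: "(\<Sum>r<?n. (-1)^r * (\<Sum>i<m. h i * ((vs @ [v])!r) i) * Dt (del r (vs @ [v])) (sorted_list_of_set P)) = 0"
        using F0 by (intro sum.neutral) (auto simp: nth_append)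
      have d: "del ?n (vs @ [v]) = vs" by (simp add: del_def)
      show ?thesis unfolding sum.lessThan_Suc z using F1 d by simp
    qed
    finally show ?thesis using True P by (simp add: mu_Dt mult.assoc flip: power_add)
  next
    case False
    then show ?thesis using coprod_mu_zero[OF P False, of "vs @ [v]"] P by (simp add: mu_def)
  qed
  finally show ?thesis .
qed

lemma form_right:
  assumes c: "c \<in> carrierC m"
  shows "(\<Sum>Q\<in>Pow {..<m}. c Q * form m g a (basisC Q)) = form m g a c"
proof -
  have fb: "form m g a (basisC Q) = (\<Sum>S\<in>Pow {..<m}. a S * g S Q)" if "Q \<in> Pow {..<m}" for Q
  proof -
    have e: "\<And>S T. a S * basisC Q T * g S T = (if Q = T then a S * g S T else 0)"
      by (simp add: basisC_def)
    have "\<And>S. (\<Sum>T\<in>Pow {..<m}. a S * basisC Q T * g S T) = a S * g S Q"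
      using that by (simp only: e sum.delta) simp
    then show ?thesis by (simp add: form_def)
  qed
  have "(\<Sum>Q\<in>Pow {..<m}. c Q * form m g a (basisC Q)) =
      (\<Sum>Q\<in>Pow {..<m}. \<Sum>S\<in>Pow {..<m}. a S * c Q * g S Q)"
    by (intro sum.cong refl) (simp add: fb sum_distrib_left mult_ac)
  also have "\<dots> = form m g a c" unfolding form_def by (rule sum.swap)
  finally show ?thesis .
qed

lemma form_left:
  assumes c: "c \<in> carrierC m"
  shows "(\<Sum>P\<in>Pow {..<m}. c P * form m g (basisC P) b) = form m g c b"
proof -
  have fb: "form m g (basisC P) b = (\<Sum>T\<in>Pow {..<m}. b T * g P T)" if "P \<in> Pow {..<m}" for P
  proof -
    have "(\<Sum>S\<in>Pow {..<m}. \<Sum>T\<in>Pow {..<m}. basisC P S * b T * g S T) =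
        (\<Sum>S\<in>Pow {..<m}. if S = P then (\<Sum>T\<in>Pow {..<m}. b T * g S T) else 0)"
      by (intro sum.cong refl) (simp add: basisC_def)
    then show ?thesis using that by (simp add: form_def)
  qed
  have "(\<Sum>P\<in>Pow {..<m}. c P * form m g (basisC P) b) =
      (\<Sum>P\<in>Pow {..<m}. \<Sum>T\<in>Pow {..<m}. c P * b T * g P T)"
    by (intro sum.cong refl) (simp add: fb sum_distrib_left mult_ac)
  also have "\<dots> = form m g c b" by (simp add: form_def)
  finally show ?thesis .
qed




lemma sum_swap_h:
  fixes h :: "nat \<Rightarrow> 'k::comm_semiring_1"
  shows "(\<Sum>Q\<in>A. (\<Sum>i\<in>B. h i * c i Q) * F Q) = (\<Sum>i\<in>B. h i * (\<Sum>Q\<in>A. c i Q * F Q))"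
  unfolding sum_distrib_left sum_distrib_right mult.assoc by (rule sum.swap)

lemma mu_carrier: "mu m us \<in> carrierC m"
  by (auto simp: carrierC_def mu_def)

theorem proposition9p2:
  fixes m :: nat and d :: int and g :: "nat set \<Rightarrow> nat set \<Rightarrow> 'k::field_char_0"
    and vs ws :: "(nat \<Rightarrow> 'k) list" and v :: "nat \<Rightarrow> 'k"
  assumes "m \<ge> 1"
    and "of_degree m d g" and "symmetric_form m g" and "cyclic_form m g"
    and "set vs \<subseteq> vecV m" and "set ws \<subseteq> vecV m" and "v \<in> vecV m"
    and "lin_indep vs" and "lin_indep ws"
    and "\<not> in_span v (vs @ ws)"
  shows "form m g (mu m (vs @ [v])) (mu m ws) = form m g (mu m vs) (mu m (v # ws))"
proof -
  obtain h where F1: "(\<Sum>i<m. h i * v i) = 1"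
    and F0: "\<forall>w\<in>set (vs @ ws). (\<Sum>i<m. h i * w i) = 0"
    using sep_functional[of "vs @ ws" m v] assms(5,6,7,10) by auto
  let ?a = "mu m (vs @ [v])" and ?b = "mu m (v # ws)"
  have cyc: "(\<lambda>P. \<Sum>Q\<in>Pow {..<m}. coprod ?b P Q * form m g ?a (basisC Q))
    = (\<lambda>Q. \<Sum>P\<in>Pow {..<m}. coprod ?a P Q * form m g (basisC P) ?b)"
    using assms(4) mu_carrier unfolding cyclic_form_def by blast
  have eqi: "\<And>i. (\<Sum>Q\<in>Pow {..<m}. coprod ?b {i} Q * form m g ?a (basisC Q))
    = (\<Sum>P\<in>Pow {..<m}. coprod ?a P {i} * form m g (basisC P) ?b)"
    using fun_cong[OF cyc] by metis
  have "form m g ?a (mu m ws) = (\<Sum>Q\<in>Pow {..<m}. mu m ws Q * form m g ?a (basisC Q))"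
    using form_right[OF mu_carrier] by metis
  also have "\<dots> = (\<Sum>Q\<in>Pow {..<m}. (\<Sum>i<m. h i * coprod ?b {i} Q) * form m g ?a (basisC Q))"
    using contract_first[OF F1] F0 by (intro sum.cong refl) auto
  also have "\<dots> = (\<Sum>i<m. h i * (\<Sum>Q\<in>Pow {..<m}. coprod ?b {i} Q * form m g ?a (basisC Q)))"
    by (rule sum_swap_h)
  also have "\<dots> = (\<Sum>i<m. h i * (\<Sum>P\<in>Pow {..<m}. coprod ?a P {i} * form m g (basisC P) ?b))"
    using eqi by simp
  also have "\<dots> = (\<Sum>P\<in>Pow {..<m}. (\<Sum>i<m. h i * coprod ?a P {i}) * form m g (basisC P) ?b)"
    by (rule sum_swap_h[symmetric])
  also have "\<dots> = (\<Sum>P\<in>Pow {..<m}. mu m vs P * form m g (basisC P) ?b)"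
    using contract_last[OF F1] F0 by (intro sum.cong refl) auto
  also have "\<dots> = form m g (mu m vs) ?b"
    using form_left[OF mu_carrier] by metis
  finally show ?thesis .
qed


end
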